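(* There is a finite alphabet $\Sigma$ and a unary FO formula $\varphi(x\,;\,\bar y)$ over strings over $\Sigma$ such that there is no consistent formula learner for $\varphi$ (with local access to the string) whose running time is sublinear in the length of the string.
   Context: Strings as structures: a string $B=a_1\cdots a_n\in\Sigma^*$ is the finite structure with universe $U(B)=\{1,\ldots,n\}$ (its positions), the natural linear order $<$ on positions, and for each $a\in\Sigma$ a unary relation $R_a$ of the $a$-labelled positions (no successor relation in the signature). FO/MSO formulas are over the signature $\{<\}\cup\{R_a:a\in\Sigma\}$. A formula $\varphi(\bar x\,;\,\bar y)$ has instance variables $\bar x=(x_1,\ldots,x_k)$ ($k$ = arity; unary means $k=1$) and parameter variables $\bar y=(y_1,\ldots,y_\ell)$. For $\bar v\in U(B)^\ell$, $[\![\varphi(\bar x;\bar v)]\!]^B:U(B)^k\to\{0,1\}$ maps $\bar u$ to $1$ iff $B\models\varphi(\bar u;\bar v)$. A training set over $B$ is a finite $T\subseteq U(B)^k\times\{0,1\}$; $\bar v$ is consistent with $\varphi,B,T$ if $[\![\varphi(\bar x;\bar v)]\!]^B(\bar u)=\lambda$ for all $(\bar u,\lambda)\in T$; $T$ is $\varphi$-consistent if such $\bar v$ exists. Local access: a learner receives $T$ and initially holds only the positions occurring in $T$; it may query the label of a position it holds and retrieve the successor and predecessor of a position it holds; each operation costs one time step (uniform cost model). A consistent formula learner for $\varphi$ is a local-access algorithm for which there are numbers $q',\ell'$ such that on every string $B$ and every $\varphi$-consistent training set $T$ it outputs a formula $\varphi'(\bar x;\bar y')$ (of MSO, in particular possibly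 FO) of quantifier rank at most $q'$ with $|\bar y'|\le \ell'$, together with a tuple $\bar v'\in U(B)^{|\bar y'|}$ consistent with $\varphi',B,T$. Sublinear running time: for every fixed bound $t$ on the size of training sets there is a function $f_t$ with $f_t(n)/n\to 0$ such that the running time on every string of length $n$ and every training set of size at most $t$ is at most $f_t(n)$. *)

theory Defs
  imports Complex_Main
begin

text \<open>Strings over an alphabet of natural-number labels; a string w is the structure
with universe the positions 0..length w - 1 (0-based), the order <, and label predicates.\<close>

datatype form =
    Lab nat nat
  | Less nat nat
  | Eq nat nat
  | Mem nat nat
  | Neg form
  | Or form form
  | Ex1 nat form
  | Ex2 nat form

fun sat :: "nat list \<Rightarrow> (nat \<Rightarrow> nat) \<Rightarrow> (nat \<Rightarrow> nat set) \<Rightarrow> form \<Rightarrow> bool" where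
  "sat w I J (Lab a x) = (I x < length w \<and> w ! I x = a)"
| "sat w I J (Less x y) = (I x < I y)"
| "sat w I J (Eq x y) = (I x = I y)"
| "sat w I J (Mem x X) = (I x \<in> J X)"
| "sat w I J (Neg f) = (\<not> sat w I J f)"
| "sat w I J (Or f g) = (sat w I J f \<or> sat w I J g)"
| "sat w I J (Ex1 x f) = (\<exists>p < length w. sat w (I(x := p)) J f)"
| "sat w I J (Ex2 X f) = (\<exists>P \<subseteq> {0..<length w}. sat w I (J(X := P)) f)"

fun fv1 :: "form \<Rightarrow> nat set" where
  "fv1 (Lab a x) = {x}"
| "fv1 (Less x y) = {x, y}"
| "fv1 (Eq x y) = {x, y}"
| "fv1 (Mem x X) = {x}"
| "fv1 (Neg f) = fv1 f"
| "fv1 (Or f g) = fv1 f \<union> fv1 g"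
| "fv1 (Ex1 x f) = fv1 f - {x}"
| "fv1 (Ex2 X f) = fv1 f"

fun fv2 :: "form \<Rightarrow> nat set" where
  "fv2 (Mem x X) = {X}"
| "fv2 (Neg f) = fv2 f"
| "fv2 (Or f g) = fv2 f \<union> fv2 g"
| "fv2 (Ex1 x f) = fv2 f"
| "fv2 (Ex2 X f) = fv2 f - {X}"
| "fv2 _ = {}"

fun labels :: "form \<Rightarrow> nat set" where
  "labels (Lab a x) = {a}"
| "labels (Neg f) = labels f"
| "labels (Or f g) = labels f \<union> labels g"
| "labels (Ex1 x f) = labels f"
| "labels (Ex2 X f) = labels f"
| "labels _ = {}"

fun qr :: "form \<Rightarrow> nat" where
  "qr (Neg f) = qr f"
| "qr (Or f g) = max (qr f) (qr g)"
| "qr (Ex1 x f) = Suc (qr f)"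
| "qr (Ex2 X f) = Suc (qr f)"
| "qr _ = 0"

fun is_FO :: "form \<Rightarrow> bool" where
  "is_FO (Mem x X) = False"
| "is_FO (Ex2 X f) = False"
| "is_FO (Neg f) = is_FO f"
| "is_FO (Or f g) = (is_FO f \<and> is_FO g)"
| "is_FO (Ex1 x f) = is_FO f"
| "is_FO _ = True"

text \<open>A formula phi(x_1..x_k ; y_1..y_l): instance variables are 0..k-1, parameter
variables are k..k+l-1; no other free variables, no free set variables, labels in Sigma.\<close>
definition wf_param_formula :: "nat set \<Rightarrow> form \<Rightarrow> nat \<Rightarrow> nat \<Rightarrow> bool" where
  "wf_param_formula \<Sigma> f k l \<longleftrightarrow> fv1 f \<subseteq> {0..<k + l} \<and> fv2 f = {} \<and> labels f \<subseteq> \<Sigma>"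

definition holds :: "nat list \<Rightarrow> form \<Rightarrow> nat \<Rightarrow> nat list \<Rightarrow> nat list \<Rightarrow> bool" where
  "holds w f k us vs = sat w (\<lambda>i. if i < k then us ! i else vs ! (i - k)) (\<lambda>_. {}) f"

definition training_set :: "nat list \<Rightarrow> nat \<Rightarrow> (nat list \<times> bool) set \<Rightarrow> bool" where
  "training_set w k T \<longleftrightarrow> finite T \<and>
     (\<forall>(us, b) \<in> T. length us = k \<and> set us \<subseteq> {0..<length w})"

definition consistent :: "nat list \<Rightarrow> form \<Rightarrow> nat \<Rightarrow> nat list \<Rightarrow> (nat list \<times> bool) set \<Rightarrow> bool" where
  "consistent w f k vs T \<longleftrightarrow> (\<forall>(us, b) \<in> T. holds w f k us vs = b)"

definition phi_consistent :: "nat list \<Rightarrow> form \<Rightarrow> nat \<Rightarrow> nat \<Rightarrow> (nat list \<times> bool) set \<Rightarrow> bool" where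
  "phi_consistent w f k l T \<longleftrightarrow>
     (\<exists>vs. length vs = l \<and> set vs \<subseteq> {0..<length w} \<and> consistent w f k vs T)"

text \<open>The learner refers to positions only through handles: indices into the list of
positions it currently holds.  Initially it holds exactly the positions occurring in the
training set.  Each query (label, successor, predecessor) costs one step.\<close>

datatype action =
    QLabel nat | QSucc nat | QPred nat
  | Output form "nat list"     (* hypothesis formula and parameter handles *)

datatype answer = ALabel nat | APos "nat option" | AInvalid

definition handle_of :: "nat list \<Rightarrow> nat \<Rightarrow> nat" where
  "handle_of hs p = (LEAST j. j < length hs \<and> hs ! j = p)"

definition acquire :: "nat list \<Rightarrow> nat \<Rightarrow> nat list \<times> answer" where
  "acquire hs p = (if p \<in> set hs then (hs, APos (Some (handle_of hs p)))
                    else (hs @ [p], APos (Some (length hs))))"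

fun respond :: "nat list \<Rightarrow> nat list \<Rightarrow> action \<Rightarrow> nat list \<times> answer" where
  "respond w hs (QLabel i) =
     (if i < length hs then (hs, ALabel (w ! (hs ! i))) else (hs, AInvalid))"
| "respond w hs (QSucc i) =
     (if i < length hs then
        (if Suc (hs ! i) < length w then acquire hs (Suc (hs ! i)) else (hs, APos None))
      else (hs, AInvalid))"
| "respond w hs (QPred i) =
     (if i < length hs then
        (if 0 < hs ! i then acquire hs (hs ! i - 1) else (hs, APos None))
      else (hs, AInvalid))"
| "respond w hs (Output f vs) = (hs, AInvalid)"

type_synonym learner = "(nat list \<times> bool) list \<Rightarrow> answer list \<Rightarrow> action"

fun exec :: "nat list \<Rightarrow> learner \<Rightarrow> (nat list \<times> bool) list \<Rightarrow> nat \<Rightarrow> nat list \<Rightarrow> answer list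
             \<Rightarrow> (form \<times> nat list \<times> nat list) option" where
  "exec w L inp s hs hist =
     (case L inp hist of
        Output f hvs \<Rightarrow> Some (f, hvs, hs)
      | q \<Rightarrow> (case s of 0 \<Rightarrow> None
              | Suc s' \<Rightarrow> (let (hs', a) = respond w hs q in exec w L inp s' hs' (hist @ [a]))))"

definition init_held :: "(nat list \<times> bool) list \<Rightarrow> nat list" where
  "init_held ts = remdups (concat (map fst ts))"

definition encode :: "(nat list \<times> bool) list \<Rightarrow> (nat list \<times> bool) list" where
  "encode ts = map (\<lambda>(us, b). (map (handle_of (init_held ts)) us, b)) ts"

definition run :: "nat list \<Rightarrow> learner \<Rightarrow> (nat list \<times> bool) list \<Rightarrow> nat \<Rightarrow>
                   (form \<times> nat list \<times> nat list) option" where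
  "run w L ts s = exec w L (encode ts) s (init_held ts) []"

definition consistent_learner :: "nat set \<Rightarrow> form \<Rightarrow> nat \<Rightarrow> nat \<Rightarrow> learner \<Rightarrow> bool" where
  "consistent_learner \<Sigma> f k l L \<longleftrightarrow>
     (\<exists>q' l'. \<forall>w ts. set w \<subseteq> \<Sigma> \<longrightarrow> distinct ts \<longrightarrow> training_set w k (set ts) \<longrightarrow>
        phi_consistent w f k l (set ts) \<longrightarrow>
        (\<exists>s f' hvs hs. run w L ts s = Some (f', hvs, hs) \<and>
           set hvs \<subseteq> {..<length hs} \<and>
           qr f' \<le> q' \<and> length hvs \<le> l' \<and> wf_param_formula \<Sigma> f' k (length hvs) \<and>
           consistent w f' k (map ((!) hs) hvs) (set ts)))"

definition sublinear_learner :: "nat set \<Rightarrow> nat \<Rightarrow> learner \<Rightarrow> bool" where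
  "sublinear_learner \<Sigma> k L \<longleftrightarrow>
     (\<forall>t. \<exists>g :: nat \<Rightarrow> real. (\<lambda>n. g n / real n) \<longlonglongrightarrow> 0 \<and>
        (\<forall>w ts. set w \<subseteq> \<Sigma> \<longrightarrow> distinct ts \<longrightarrow> length ts \<le> t \<longrightarrow> training_set w k (set ts) \<longrightarrow>
           run w L ts (nat \<lfloor>g (length w)\<rfloor>) \<noteq> None))"

end

theory Submission
  imports Defs
begin

definition beh :: "'a list set \<Rightarrow> 'a list \<Rightarrow> 'a list \<Rightarrow> 'a list \<Rightarrow> bool" where
  "beh L u = (\<lambda>x y. x @ u @ y \<in> L)"

definition reg :: "'a list set \<Rightarrow> bool" where
  "reg L \<longleftrightarrow> finite (range (beh L))"

lemma reg_abs:
  assumes "finite (range \<alpha>)" "\<And>u v. \<alpha> u = \<alpha> v \<Longrightarrow> beh L u = beh L v"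
  shows "reg L"
proof -
  have "range (beh L) \<subseteq> (\<lambda>a. beh L (inv \<alpha> a)) ` range \<alpha>"
  proof
    fix F assume "F \<in> range (beh L)"
    then obtain u where u: "F = beh L u" by auto
    have "\<alpha> (inv \<alpha> (\<alpha> u)) = \<alpha> u" by (simp add: f_inv_into_f)
    hence "beh L (inv \<alpha> (\<alpha> u)) = beh L u" using assms(2) by blast
    hence "F = beh L (inv \<alpha> (\<alpha> u))" using u by simp
    moreover have "\<alpha> u \<in> range \<alpha>" by simp
    ultimately show "F \<in> (\<lambda>a. beh L (inv \<alpha> a)) ` range \<alpha>" by blast
  qed
  thus ?thesis unfolding reg_def using assms(1) finite_subset by blast
qed

lemma reg_compl: "reg L \<Longrightarrow> reg (- L)"
proof -
  assume "reg L"
  have "range (beh (-L)) = (\<lambda>F x y. \<not> F x y) ` range (beh L)"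
    by (auto simp: beh_def)
  thus ?thesis using \<open>reg L\<close> unfolding reg_def by simp
qed

lemma reg_union: "reg L1 \<Longrightarrow> reg L2 \<Longrightarrow> reg (L1 \<union> L2)"
proof -
  assume a: "reg L1" "reg L2"
  have "range (beh (L1 \<union> L2)) \<subseteq> (\<lambda>(F,G) x y. F x y \<or> G x y) ` (range (beh L1) \<times> range (beh L2))"
  proof
    fix H assume "H \<in> range (beh (L1 \<union> L2))"
    then obtain u where "H = beh (L1 \<union> L2) u" by auto
    hence "H = (\<lambda>(F,G) x y. F x y \<or> G x y) (beh L1 u, beh L2 u)" by (auto simp: beh_def)
    thus "H \<in> (\<lambda>(F,G) x y. F x y \<or> G x y) ` (range (beh L1) \<times> range (beh L2))" by blast
  qed
  thus ?thesis using a unfolding reg_def by (meson finite_SigmaI finite_imageI finite_subset)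
qed

lemma reg_inter: "reg L1 \<Longrightarrow> reg L2 \<Longrightarrow> reg (L1 \<inter> L2)"
proof -
  assume "reg L1" "reg L2"
  hence "reg (- (- L1 \<union> - L2))" by (intro reg_compl reg_union)
  thus ?thesis by simp
qed

definition proj :: "('a \<Rightarrow> 'a \<Rightarrow> bool) \<Rightarrow> 'a list set \<Rightarrow> 'a list set" where
  "proj R L = {e. \<exists>e'. list_all2 R e' e \<and> e' \<in> L}"

lemma reg_proj: "reg L \<Longrightarrow> reg (proj R L)"
proof -
  assume a: "reg L"
  define \<Phi> where "\<Phi> = (\<lambda>S x y. \<exists>F\<in>S. \<exists>x' y'. list_all2 R x' x \<and> list_all2 R y' y \<and> F x' y')"
  have "range (beh (proj R L)) \<subseteq> \<Phi> ` Pow (range (beh L))"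
  proof
    fix H assume "H \<in> range (beh (proj R L))"
    then obtain u where u: "H = beh (proj R L) u" by auto
    have "H = \<Phi> (beh L ` {u'. list_all2 R u' u})"
    proof (intro ext)
      fix x y
      show "H x y = \<Phi> (beh L ` {u'. list_all2 R u' u}) x y"
      proof
        assume "H x y"
        then obtain e' where e': "list_all2 R e' (x @ u @ y)" "e' \<in> L"
          unfolding u beh_def proj_def by blast
        from e'(1) obtain x' r where xr: "e' = x' @ r" "list_all2 R x' x" "list_all2 R r (u @ y)"
          unfolding list_all2_append2 by blast
        from xr(3) obtain u' y' where uy: "r = u' @ y'" "list_all2 R u' u" "list_all2 R y' y"
          unfolding list_all2_append2 by blast
        have "beh L u' x' y'" using e'(2) xr uy by (simp add: beh_def)
        thus "\<Phi> (beh L ` {u'. list_all2 R u' u}) x y" unfolding \<Phi>_def using xr uy by blast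
      next
        assume "\<Phi> (beh L ` {u'. list_all2 R u' u}) x y"
        then obtain u' x' y' where h: "list_all2 R u' u" "list_all2 R x' x" "list_all2 R y' y" "beh L u' x' y'"
          unfolding \<Phi>_def by blast
        have "list_all2 R (x' @ u' @ y') (x @ u @ y)" using h by (intro list_all2_appendI)
        moreover have "x' @ u' @ y' \<in> L" using h(4) by (simp add: beh_def)
        ultimately show "H x y" unfolding u beh_def proj_def by blast
      qed
    qed
    thus "H \<in> \<Phi> ` Pow (range (beh L))" by blast
  qed
  thus ?thesis using a unfolding reg_def by (meson finite_Pow_iff finite_imageI finite_subset)
qed

lemma reg_exletter: "reg {e. \<exists>c\<in>set e. P c}"
proof (rule reg_abs[where \<alpha>="\<lambda>u. \<exists>c\<in>set u. P c"])
  show "finite (range (\<lambda>u. \<exists>c\<in>set u. P c))" by simp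
next
  fix u v :: "'a list" assume h: "(\<exists>c\<in>set u. P c) = (\<exists>c\<in>set v. P c)"
  show "beh {e. \<exists>c\<in>set e. P c} u = beh {e. \<exists>c\<in>set e. P c} v"
  proof (intro ext)
    fix x y :: "'a list"
    show "beh {e. \<exists>c\<in>set e. P c} u x y = beh {e. \<exists>c\<in>set e. P c} v x y"
      unfolding beh_def mem_Collect_eq set_append bex_Un h ..
  qed
qed

definition cntP :: "('a \<Rightarrow> bool) \<Rightarrow> 'a list \<Rightarrow> nat" where
  "cntP P e = length (filter P e)"

lemma reg_one: "reg {e. cntP P e = 1}"
proof (rule reg_abs[where \<alpha>="\<lambda>u. min 2 (cntP P u)"])
  show "finite (range (\<lambda>u. min 2 (cntP P u)))"
    by (rule finite_subset[of _ "{..2}"]) auto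
next
  fix u v assume h: "min 2 (cntP P u) = min 2 (cntP P v)"
  show "beh {e. cntP P e = 1} u = beh {e. cntP P e = 1} v"
  proof (intro ext)
    fix x y
    have "cntP P (x @ u @ y) = cntP P x + cntP P u + cntP P y"
      "cntP P (x @ v @ y) = cntP P x + cntP P v + cntP P y" by (simp_all add: cntP_def)
    moreover have "cntP P u = cntP P v \<or> (2 \<le> cntP P u \<and> 2 \<le> cntP P v)"
      using h by (simp add: min_def split: if_splits)
    ultimately show "beh {e. cntP P e = 1} u x y = beh {e. cntP P e = 1} v x y"
      by (auto simp: beh_def)
  qed
qed

definition haspq :: "('a \<Rightarrow> bool) \<Rightarrow> ('a \<Rightarrow> bool) \<Rightarrow> 'a list \<Rightarrow> bool" where
  "haspq P Q e \<longleftrightarrow> (\<exists>i j. i < j \<and> j < length e \<and> P (e!i) \<and> Q (e!j))"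

lemma haspq_append:
  "haspq P Q (a @ b) \<longleftrightarrow> haspq P Q a \<or> haspq P Q b \<or> ((\<exists>c\<in>set a. P c) \<and> (\<exists>c\<in>set b. Q c))"
proof
  assume "haspq P Q (a @ b)"
  then obtain i j where ij: "i < j" "j < length (a@b)" "P ((a@b)!i)" "Q ((a@b)!j)"
    unfolding haspq_def by blast
  show "haspq P Q a \<or> haspq P Q b \<or> ((\<exists>c\<in>set a. P c) \<and> (\<exists>c\<in>set b. Q c))"
  proof (cases "j < length a")
    case True
    hence "i < length a" using ij by simp
    hence "haspq P Q a" unfolding haspq_def using ij True
      by (intro exI[of _ i] exI[of _ j]) (simp add: nth_append)
    thus ?thesis by blast
  next
    case False
    note F = False
    show ?thesis
    proof (cases "i < length a")
      case True
      hence "P (a!i)" using ij by (simp add: nth_append)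
      hence c1: "\<exists>c\<in>set a. P c" using True nth_mem by blast
      have "Q (b!(j - length a))" using ij F by (simp add: nth_append)
      moreover have "j - length a < length b" using ij F by simp
      ultimately have "\<exists>c\<in>set b. Q c" using nth_mem by blast
      thus ?thesis using c1 by blast
    next
      case False
      have "i - length a < j - length a" "j - length a < length b" "P (b!(i - length a))" "Q (b!(j - length a))"
        using ij F False by (auto simp: nth_append)
      hence "haspq P Q b" unfolding haspq_def by blast
      thus ?thesis by blast
    qed
  qed
next
  assume h: "haspq P Q a \<or> haspq P Q b \<or> ((\<exists>c\<in>set a. P c) \<and> (\<exists>c\<in>set b. Q c))"
  show "haspq P Q (a @ b)"
  proof -
    { assume "haspq P Q a"
      then obtain i j where "i < j" "j < length a" "P (a!i)" "Q (a!j)" unfolding haspq_def by blast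
      hence ?thesis unfolding haspq_def by (intro exI[of _ i] exI[of _ j]) (simp add: nth_append) }
    moreover
    { assume "haspq P Q b"
      then obtain i j where "i < j" "j < length b" "P (b!i)" "Q (b!j)" unfolding haspq_def by blast
      hence ?thesis unfolding haspq_def by (intro exI[of _ "i + length a"] exI[of _ "j + length a"]) (simp add: nth_append) }
    moreover
    { assume "(\<exists>c\<in>set a. P c) \<and> (\<exists>c\<in>set b. Q c)"
      then obtain i j where "i < length a" "j < length b" "P (a!i)" "Q (b!j)" by (auto simp: in_set_conv_nth)
      hence ?thesis unfolding haspq_def by (intro exI[of _ "i"] exI[of _ "j + length a"]) (simp add: nth_append) }
    ultimately show ?thesis using h by blast
  qed
qed

lemma reg_haspq: "reg {e. haspq P Q e}"
proof (rule reg_abs[where \<alpha>="\<lambda>u. ((\<exists>c\<in>set u. P c), (\<exists>c\<in>set u. Q c), haspq P Q u)"])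
  show "finite (range (\<lambda>u. ((\<exists>c\<in>set u. P c), (\<exists>c\<in>set u. Q c), haspq P Q u)))"
    by (rule finite_subset[of _ UNIV]) auto
next
  fix u v assume "((\<exists>c\<in>set u. P c), (\<exists>c\<in>set u. Q c), haspq P Q u) = ((\<exists>c\<in>set v. P c), (\<exists>c\<in>set v. Q c), haspq P Q v)"
  hence h: "(\<exists>c\<in>set u. P c) = (\<exists>c\<in>set v. P c)" "(\<exists>c\<in>set u. Q c) = (\<exists>c\<in>set v. Q c)"
    "haspq P Q u = haspq P Q v" by simp_all
  show "beh {e. haspq P Q e} u = beh {e. haspq P Q e} v"
  proof (intro ext)
    fix x y
    show "beh {e. haspq P Q e} u x y = beh {e. haspq P Q e} v x y"
      unfolding beh_def mem_Collect_eq haspq_append set_append bex_Un h ..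
  qed
qed

lemma beh_app: "beh L (u @ v) = (\<lambda>x y. beh L u x (v @ y))"
  by (simp add: beh_def)

lemma beh_app_cong: "beh L u = beh L u' \<Longrightarrow> beh L (u @ v) = beh L (u' @ v)"
  by (simp add: beh_app)

lemma reg_pump:
  assumes "reg L"
  shows "\<exists>N p. 0 < p \<and> (\<forall>k. beh L (replicate (N + k * p) c) = beh L (replicate N c))"
proof -
  let ?h = "\<lambda>i. beh L (replicate i c)"
  have "finite (range ?h)" using assms unfolding reg_def by (rule finite_subset[rotated]) auto
  hence "\<not> inj ?h" using finite_imageD infinite_UNIV_nat by blast
  then obtain i j where ij: "i \<noteq> j" "?h i = ?h j" unfolding inj_def by blast
  obtain a b where ab: "a < b" "?h a = ?h b"
    using ij by (metis linorder_neqE_nat)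
  have "\<forall>k. ?h (a + k * (b - a)) = ?h a"
  proof
    fix k show "?h (a + k * (b - a)) = ?h a"
    proof (induction k)
      case 0 thus ?case by simp
    next
      case (Suc k)
      have e: "a + Suc k * (b - a) = b + k * (b - a)" using ab(1) by simp
      have "replicate (a + Suc k * (b - a)) c = replicate b c @ replicate (k * (b - a)) c"
        unfolding e by (simp add: replicate_add[symmetric])
      moreover have "replicate (a + k * (b - a)) c = replicate a c @ replicate (k * (b - a)) c"
        by (simp add: replicate_add[symmetric])
      ultimately show ?case using Suc ab(2) beh_app_cong by metis
    qed
  qed
  thus ?thesis using ab by (intro exI[of _ a] exI[of _ "b - a"]) auto
qed

type_synonym letter = "nat \<times> nat set \<times> nat set"

definition enc :: "nat list \<Rightarrow> (nat \<Rightarrow> nat) \<Rightarrow> (nat \<Rightarrow> nat set) \<Rightarrow> letter list" where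
  "enc w I J = map (\<lambda>i. (w!i, {z. I z = i}, {X. i \<in> J X})) [0..<length w]"

definition R1 :: "nat \<Rightarrow> letter \<Rightarrow> letter \<Rightarrow> bool" where
  "R1 x c' c \<longleftrightarrow> fst c' = fst c \<and> fst (snd c') - {x} = fst (snd c) - {x} \<and> snd (snd c') = snd (snd c)"

definition R2 :: "nat \<Rightarrow> letter \<Rightarrow> letter \<Rightarrow> bool" where
  "R2 X c' c \<longleftrightarrow> fst c' = fst c \<and> fst (snd c') = fst (snd c) \<and> snd (snd c') - {X} = snd (snd c) - {X}"

fun lang :: "form \<Rightarrow> letter list set" where
  "lang (Lab a x) = {e. \<exists>c\<in>set e. x \<in> fst (snd c) \<and> fst c = a}"
| "lang (Less x y) = {e. haspq (\<lambda>c. x \<in> fst (snd c)) (\<lambda>c. y \<in> fst (snd c)) e}"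
| "lang (Eq x y) = {e. \<exists>c\<in>set e. x \<in> fst (snd c) \<and> y \<in> fst (snd c)}"
| "lang (Mem x X) = {e. \<exists>c\<in>set e. x \<in> fst (snd c) \<and> X \<in> snd (snd c)}"
| "lang (Neg f) = - lang f"
| "lang (Or f g) = lang f \<union> lang g"
| "lang (Ex1 x f) = proj (R1 x) (lang f \<inter> {e. cntP (\<lambda>c. x \<in> fst (snd c)) e = 1})"
| "lang (Ex2 X f) = proj (R2 X) (lang f)"

lemma reg_lang: "reg (lang f)"
proof (induction f)
  case (Ex1 x f)
  thus ?case by (simp only: lang.simps) (intro reg_proj reg_inter reg_one)
qed (auto intro!: reg_exletter reg_haspq reg_compl reg_union reg_proj)

lemma enc_R1_inv:
  assumes "list_all2 (R1 x) e' (enc w I J)" "cntP (\<lambda>c. x \<in> fst (snd c)) e' = 1"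
  shows "\<exists>p<length w. e' = enc w (I(x:=p)) J"
proof -
  have len: "length e' = length w" using assms(1) by (simp add: list_all2_lengthD enc_def)
  have "card {i. i < length e' \<and> x \<in> fst (snd (e'!i))} = 1"
    using assms(2) by (simp add: cntP_def length_filter_conv_card)
  then obtain p where p: "{i. i < length e' \<and> x \<in> fst (snd (e'!i))} = {p}"
    by (auto simp: card_1_singleton_iff)
  hence pl: "p < length w" using len by auto
  have "e' = enc w (I(x:=p)) J"
  proof (rule nth_equalityI)
    show "length e' = length (enc w (I(x:=p)) J)" using len by (simp add: enc_def)
  next
    fix i assume i: "i < length e'"
    have r: "R1 x (e'!i) (enc w I J ! i)" using assms(1) i by (simp add: list_all2_conv_all_nth)
    have xi: "x \<in> fst (snd (e'!i)) \<longleftrightarrow> i = p" using p i by blast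
    have "fst (snd (e'!i)) = {z. (I(x:=p)) z = i}"
    proof (intro set_eqI)
      fix z show "z \<in> fst (snd (e'!i)) \<longleftrightarrow> z \<in> {z. (I(x:=p)) z = i}"
      proof (cases "z = x")
        case True thus ?thesis using xi by auto
      next
        case False thus ?thesis using r i len by (auto simp: R1_def enc_def)
      qed
    qed
    thus "e'!i = enc w (I(x:=p)) J ! i" using r i len
      by (cases "e'!i") (auto simp: R1_def enc_def)
  qed
  thus ?thesis using pl by blast
qed

lemma enc_R1:
  assumes "p < length w"
  shows "list_all2 (R1 x) (enc w (I(x:=p)) J) (enc w I J) \<and> cntP (\<lambda>c. x \<in> fst (snd c)) (enc w (I(x:=p)) J) = 1"
proof
  show "list_all2 (R1 x) (enc w (I(x:=p)) J) (enc w I J)"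
    by (auto simp: list_all2_conv_all_nth enc_def R1_def)
  have "{i. i < length (enc w (I(x:=p)) J) \<and> x \<in> fst (snd (enc w (I(x:=p)) J ! i))} = {p}"
    using assms by (auto simp: enc_def)
  thus "cntP (\<lambda>c. x \<in> fst (snd c)) (enc w (I(x:=p)) J) = 1"
    by (simp add: cntP_def length_filter_conv_card)
qed

lemma enc_R2_inv:
  assumes "list_all2 (R2 X) e' (enc w I J)"
  shows "\<exists>P\<subseteq>{0..<length w}. e' = enc w I (J(X:=P))"
proof -
  have len: "length e' = length w" using assms(1) by (simp add: list_all2_lengthD enc_def)
  define P where "P = {i. i < length w \<and> X \<in> snd (snd (e'!i))}"
  have "e' = enc w I (J(X:=P))"
  proof (rule nth_equalityI)
    show "length e' = length (enc w I (J(X:=P)))" using len by (simp add: enc_def)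
  next
    fix i assume i: "i < length e'"
    have r: "R2 X (e'!i) (enc w I J ! i)" using assms(1) i by (simp add: list_all2_conv_all_nth)
    have "snd (snd (e'!i)) = {Y. i \<in> (J(X:=P)) Y}"
    proof (intro set_eqI)
      fix Y show "Y \<in> snd (snd (e'!i)) \<longleftrightarrow> Y \<in> {Y. i \<in> (J(X:=P)) Y}"
      proof (cases "Y = X")
        case True thus ?thesis using i len by (auto simp: P_def)
      next
        case False thus ?thesis using r i len by (auto simp: R2_def enc_def)
      qed
    qed
    thus "e'!i = enc w I (J(X:=P)) ! i" using r i len
      by (cases "e'!i") (auto simp: R2_def enc_def)
  qed
  moreover have "P \<subseteq> {0..<length w}" by (auto simp: P_def)
  ultimately show ?thesis by blast
qed

lemma enc_R2:
  "list_all2 (R2 X) (enc w I (J(X:=P))) (enc w I J)"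
  by (auto simp: list_all2_conv_all_nth enc_def R2_def)

lemma nth_enc: "i < length w \<Longrightarrow> enc w I J ! i = (w!i, {z. I z = i}, {X. i \<in> J X})"
  by (simp add: enc_def)

lemma bex_enc: "(\<exists>c\<in>set (enc w I J). P c) = (\<exists>i<length w. P (w!i, {z. I z = i}, {X. i \<in> J X}))"
  unfolding enc_def by (simp add: Bex_def image_iff) (metis atLeastLessThan_iff zero_le)

lemma lc_Lab: "(enc w I J \<in> lang (Lab a x)) = sat w I J (Lab a x)"
  by (simp add: bex_enc)

lemma lc_Mem: "I x < length w \<Longrightarrow> (enc w I J \<in> lang (Mem x X)) = sat w I J (Mem x X)"
  by (simp add: bex_enc)

lemma lc_Eq: "I x < length w \<Longrightarrow> (enc w I J \<in> lang (Eq x y)) = sat w I J (Eq x y)"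
proof
  assume "enc w I J \<in> lang (Eq x y)"
  then obtain i where "i < length w" "I x = i" "I y = i" by (auto simp: bex_enc)
  thus "sat w I J (Eq x y)" by simp
next
  assume "sat w I J (Eq x y)" "I x < length w"
  thus "enc w I J \<in> lang (Eq x y)" unfolding lang.simps mem_Collect_eq bex_enc
    by (intro exI[of _ "I x"]) simp
qed

lemma lc_Less: "I y < length w \<Longrightarrow> (enc w I J \<in> lang (Less x y)) = sat w I J (Less x y)"
proof
  assume "enc w I J \<in> lang (Less x y)"
  then obtain i j where "i < j" "j < length w" "x \<in> fst (snd (enc w I J ! i))" "y \<in> fst (snd (enc w I J ! j))"
    unfolding lang.simps mem_Collect_eq haspq_def by (auto simp: enc_def)
  thus "sat w I J (Less x y)" by (simp add: nth_enc)
next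
  assume a: "sat w I J (Less x y)" and b: "I y < length w"
  show "enc w I J \<in> lang (Less x y)" unfolding lang.simps haspq_def mem_Collect_eq
    by (rule exI[of _ "I x"], rule exI[of _ "I y"], insert a b, simp add: nth_enc enc_def)
qed

lemma lang_correct:
  "(\<forall>z\<in>fv1 f. I z < length w) \<Longrightarrow> (enc w I J \<in> lang f) = sat w I J f"
proof (induction f arbitrary: I J)
  case (Lab a x)
  show ?case by (rule lc_Lab)
next
  case (Less x y)
  thus ?case by (intro lc_Less) simp
next
  case (Eq x y)
  thus ?case by (intro lc_Eq) simp
next
  case (Mem x X)
  thus ?case by (intro lc_Mem) simp
next
  case (Neg f)
  have "(enc w I J \<in> lang f) = sat w I J f" using Neg.prems by (intro Neg.IH) simp
  thus ?case by simp
next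
  case (Or f g)
  have "(enc w I J \<in> lang f) = sat w I J f" using Or.prems by (intro Or.IH(1)) simp
  moreover have "(enc w I J \<in> lang g) = sat w I J g" using Or.prems by (intro Or.IH(2)) simp
  ultimately show ?case by simp
next
  case (Ex1 x f)
  have IH: "(enc w (I(x:=p)) J \<in> lang f) = sat w (I(x:=p)) J f" if "p < length w" for p
  proof (rule Ex1.IH)
    show "\<forall>z\<in>fv1 f. (I(x:=p)) z < length w" using Ex1.prems that by auto
  qed
  show ?case
  proof
    assume "enc w I J \<in> lang (Ex1 x f)"
    then obtain e' where e': "list_all2 (R1 x) e' (enc w I J)" "e' \<in> lang f" "cntP (\<lambda>c. x \<in> fst (snd c)) e' = 1"
      by (auto simp: proj_def)
    obtain p where p: "p < length w" "e' = enc w (I(x:=p)) J" using enc_R1_inv[OF e'(1) e'(3)] by blast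
    have "sat w (I(x:=p)) J f" using IH[OF p(1)] e'(2) p(2) by simp
    thus "sat w I J (Ex1 x f)" using p(1) by auto
  next
    assume "sat w I J (Ex1 x f)"
    then obtain p where p: "p < length w" "sat w (I(x:=p)) J f" by auto
    hence "enc w (I(x:=p)) J \<in> lang f" using IH[OF p(1)] by simp
    thus "enc w I J \<in> lang (Ex1 x f)" using enc_R1[OF p(1), of x I J] unfolding lang.simps proj_def by blast
  qed
next
  case (Ex2 X f)
  have IH: "(enc w I (J(X:=P)) \<in> lang f) = sat w I (J(X:=P)) f" for P
    using Ex2.prems by (intro Ex2.IH) simp
  show ?case
  proof
    assume "enc w I J \<in> lang (Ex2 X f)"
    then obtain e' where e': "list_all2 (R2 X) e' (enc w I J)" "e' \<in> lang f"
      by (auto simp: proj_def)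
    obtain P where P: "P \<subseteq> {0..<length w}" "e' = enc w I (J(X:=P))" using enc_R2_inv[OF e'(1)] by blast
    have "sat w I (J(X:=P)) f" using IH[of P] e'(2) P(2) by simp
    thus "sat w I J (Ex2 X f)" using P(1) by auto
  next
    assume "sat w I J (Ex2 X f)"
    then obtain P where P: "P \<subseteq> {0..<length w}" "sat w I (J(X:=P)) f" by auto
    hence "enc w I (J(X:=P)) \<in> lang f" using IH[of P] by simp
    thus "enc w I J \<in> lang (Ex2 X f)" using enc_R2[of X w I J P] unfolding lang.simps proj_def by blast
  qed
qed

lemma sat_cong:
  "(\<forall>z\<in>fv1 f. I z = I' z) \<Longrightarrow> sat w I J f = sat w I' J f"
proof (induction f arbitrary: I I' J)
  case (Ex1 x f)
  have h: "sat w (I(x:=p)) J f = sat w (I'(x:=p)) J f" for p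
  proof -
    have "\<forall>z\<in>fv1 f. (I(x:=p)) z = (I'(x:=p)) z" using Ex1.prems by auto
    thus ?thesis by (rule Ex1.IH)
  qed
  thus ?case by simp
next
  case (Ex2 X f)
  have "sat w I (J(X:=P)) f = sat w I' (J(X:=P)) f" for P
    using Ex2.IH[of I I' "J(X:=P)"] Ex2.prems by (simp del: fun_upd_apply)
  thus ?case by simp
next
  case (Neg f)
  have "sat w I J f = sat w I' J f" using Neg.IH[of I I' J] Neg.prems by simp
  thus ?case by simp
next
  case (Or f g)
  have "sat w I J f = sat w I' J f" using Or.IH(1)[of I I' J] Or.prems by simp
  moreover have "sat w I J g = sat w I' J g" using Or.IH(2)[of I I' J] Or.prems by simp
  ultimately show ?case by simp
qed (simp_all only: sat.simps fv1.simps, auto)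

definition hoA :: "'a list \<Rightarrow> 'a \<Rightarrow> nat" where
  "hoA hs p = (LEAST j. j < length hs \<and> hs ! j = p)"

definition acqA :: "(nat \<times> int) list \<Rightarrow> nat \<times> int \<Rightarrow> (nat \<times> int) list \<times> answer" where
  "acqA hs p = (if p \<in> set hs then (hs, APos (Some (hoA hs p))) else (hs @ [p], APos (Some (length hs))))"

fun respA :: "(nat \<times> int) list \<Rightarrow> action \<Rightarrow> (nat \<times> int) list \<times> answer" where
  "respA hs (QLabel i) = (if i < length hs then (hs, ALabel 0) else (hs, AInvalid))"
| "respA hs (QSucc i) = (if i < length hs then acqA hs (fst (hs!i), snd (hs!i) + 1) else (hs, AInvalid))"
| "respA hs (QPred i) = (if i < length hs then acqA hs (fst (hs!i), snd (hs!i) - 1) else (hs, AInvalid))"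
| "respA hs (Output f vs) = (hs, AInvalid)"

fun execA :: "learner \<Rightarrow> (nat list \<times> bool) list \<Rightarrow> nat \<Rightarrow> (nat \<times> int) list \<Rightarrow> answer list
             \<Rightarrow> (form \<times> nat list \<times> (nat \<times> int) list) option" where
  "execA L inp s hs hist =
     (case L inp hist of
        Output f hvs \<Rightarrow> Some (f, hvs, hs)
      | q \<Rightarrow> (case s of 0 \<Rightarrow> None
              | Suc s' \<Rightarrow> (let (hs', a) = respA hs q in execA L inp s' hs' (hist @ [a]))))"

declare exec.simps[simp del] execA.simps[simp del]

lemma exec_out: "L inp hist = Output f v \<Longrightarrow> exec w L inp s hs hist = Some (f, v, hs)"
  by (subst exec.simps) simp

lemma exec_zero: "(\<forall>f v. L inp hist \<noteq> Output f v) \<Longrightarrow> exec w L inp 0 hs hist = None"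
  by (subst exec.simps) (cases "L inp hist"; simp)

lemma exec_step: "(\<forall>f v. L inp hist \<noteq> Output f v) \<Longrightarrow> respond w hs (L inp hist) = (hs', a) \<Longrightarrow>
   exec w L inp (Suc s) hs hist = exec w L inp s hs' (hist @ [a])"
  by (subst exec.simps) (cases "L inp hist"; simp)

lemma execA_out: "L inp hist = Output f v \<Longrightarrow> execA L inp s hs hist = Some (f, v, hs)"
  by (subst execA.simps) simp

lemma execA_zero: "(\<forall>f v. L inp hist \<noteq> Output f v) \<Longrightarrow> execA L inp 0 hs hist = None"
  by (subst execA.simps) (cases "L inp hist"; simp)

lemma execA_step: "(\<forall>f v. L inp hist \<noteq> Output f v) \<Longrightarrow> respA hs (L inp hist) = (hs', a) \<Longrightarrow>
   execA L inp (Suc s) hs hist = execA L inp s hs' (hist @ [a])"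
  by (subst execA.simps) (cases "L inp hist"; simp)

definition conc :: "(nat \<Rightarrow> nat) \<Rightarrow> nat \<times> int \<Rightarrow> nat" where
  "conc pos a = nat (int (pos (fst a)) + snd a)"

definition good :: "(nat \<Rightarrow> nat) \<Rightarrow> nat \<Rightarrow> nat \<Rightarrow> nat \<Rightarrow> bool" where
  "good pos n K m \<longleftrightarrow> (\<forall>j<2*m. K < pos j \<and> pos j + K + 1 < n) \<and>
     (\<forall>j<2*m. \<forall>j'<2*m. j \<noteq> j' \<longrightarrow> pos j + 2*K + 2 < pos j' \<or> pos j' + 2*K + 2 < pos j)"

definition bnd :: "nat \<Rightarrow> nat \<Rightarrow> (nat \<times> int) list \<Rightarrow> bool" where
  "bnd m D hs \<longleftrightarrow> (\<forall>a\<in>set hs. fst a < 2*m \<and> \<bar>snd a\<bar> \<le> int D)"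

lemma bnd_mono: "bnd m D hs \<Longrightarrow> D \<le> D' \<Longrightarrow> bnd m D' hs"
  by (force simp: bnd_def)

lemma bnd_append: "bnd m D hs \<Longrightarrow> fst p < 2*m \<Longrightarrow> \<bar>snd p\<bar> \<le> int D \<Longrightarrow> bnd m D (hs @ [p])"
  by (auto simp: bnd_def)

lemma acqA_bnd: "bnd m D hs \<Longrightarrow> fst p < 2*m \<Longrightarrow> \<bar>snd p\<bar> \<le> int (Suc D) \<Longrightarrow> acqA hs p = (hs', a) \<Longrightarrow> bnd m (Suc D) hs'"
proof (cases "p \<in> set hs")
  case True
  assume "bnd m D hs" "acqA hs p = (hs', a)"
  thus ?thesis using True by (auto simp: acqA_def intro: bnd_mono)
next
  case False
  assume b: "bnd m D hs" "fst p < 2*m" "\<bar>snd p\<bar> \<le> int (Suc D)" "acqA hs p = (hs', a)"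
  hence "hs' = hs @ [p]" using False by (simp add: acqA_def)
  moreover have "bnd m (Suc D) hs" using b(1) by (rule bnd_mono) simp
  ultimately show ?thesis using bnd_append b by blast
qed

lemma respA_bnd: "bnd m D hs \<Longrightarrow> respA hs q = (hs', a) \<Longrightarrow> bnd m (Suc D) hs'"
proof (cases q)
  case (QSucc i)
  assume b: "bnd m D hs" and r: "respA hs q = (hs', a)"
  show ?thesis
  proof (cases "i < length hs")
    case True
    hence "hs!i \<in> set hs" by simp
    hence "fst (hs!i) < 2*m" "\<bar>snd (hs!i) + 1\<bar> \<le> int (Suc D)" using b by (auto simp: bnd_def)
    moreover have "acqA hs (fst (hs!i), snd (hs!i) + 1) = (hs', a)" using r QSucc True by simp
    ultimately show ?thesis using acqA_bnd[OF b, of "(fst (hs!i), snd (hs!i) + 1)" hs' a] by simp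
  next
    case False thus ?thesis using r b QSucc by (auto intro: bnd_mono)
  qed
next
  case (QPred i)
  assume b: "bnd m D hs" and r: "respA hs q = (hs', a)"
  show ?thesis
  proof (cases "i < length hs")
    case True
    hence "hs!i \<in> set hs" by simp
    hence "fst (hs!i) < 2*m" "\<bar>snd (hs!i) - 1\<bar> \<le> int (Suc D)" using b by (auto simp: bnd_def)
    moreover have "acqA hs (fst (hs!i), snd (hs!i) - 1) = (hs', a)" using r QPred True by simp
    ultimately show ?thesis using acqA_bnd[OF b, of "(fst (hs!i), snd (hs!i) - 1)" hs' a] by simp
  next
    case False thus ?thesis using r b QPred by (auto intro: bnd_mono)
  qed
qed (auto intro: bnd_mono split: if_splits)

lemma conc_inj:
  assumes g: "good pos n K m" and a: "fst a < 2*m" "\<bar>snd a\<bar> \<le> int K"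
    and b: "fst b < 2*m" "\<bar>snd b\<bar> \<le> int K" and e: "conc pos a = conc pos b"
  shows "a = b"
proof -
  obtain j d where ad: "a = (j, d)" by force
  obtain j' d' where bd: "b = (j', d')" by force
  have p1: "K < pos j" "K < pos j'" using g a b ad bd by (auto simp: good_def)
  have "int (pos j) + d = int (pos j') + d'" using e p1 a b ad bd by (simp add: conc_def)
  moreover have "j \<noteq> j' \<Longrightarrow> pos j + 2*K + 2 < pos j' \<or> pos j' + 2*K + 2 < pos j"
    using g a b ad bd by (auto simp: good_def)
  ultimately show ?thesis using a b ad bd by (cases "j = j'") auto
qed

lemma conc_lt: "good pos n K m \<Longrightarrow> fst a < 2*m \<Longrightarrow> \<bar>snd a\<bar> \<le> int K \<Longrightarrow> conc pos a < n"
  by (auto simp: good_def conc_def)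

lemma handle_sim:
  assumes "inj_on f (insert a (set hs))"
  shows "handle_of (map f hs) (f a) = hoA hs a"
proof -
  have "\<And>j. (j < length (map f hs) \<and> map f hs ! j = f a) \<longleftrightarrow> (j < length hs \<and> hs ! j = a)"
    using assms by (auto simp: inj_on_def)
  thus ?thesis unfolding handle_of_def hoA_def by simp
qed

lemma acq_sim:
  assumes "inj_on f (insert a (set hs))"
  shows "acquire (map f hs) (f a) = (\<lambda>(h, x). (map f h, x)) (acqA hs a)"
proof -
  have "f a \<in> set (map f hs) \<longleftrightarrow> a \<in> set hs" using assms by (auto simp: inj_on_def)
  thus ?thesis using handle_sim[OF assms] by (simp add: acquire_def acqA_def)
qed

lemma resp_sim:
  assumes g: "good pos n K m" and b: "bnd m D hs" and D: "D < K" and r: "respA hs q = (hs', a)"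
  shows "respond (replicate n 0) (map (conc pos) hs) q = (map (conc pos) hs', a)"
proof -
  have inj: "inj_on (conc pos) (insert x (set hs))" if "fst x < 2*m" "\<bar>snd x\<bar> \<le> int K" for x
  proof (rule inj_onI)
    fix u v assume "u \<in> insert x (set hs)" "v \<in> insert x (set hs)" "conc pos u = conc pos v"
    moreover have "\<forall>y\<in>set hs. fst y < 2*m \<and> \<bar>snd y\<bar> \<le> int K" using b D by (force simp: bnd_def)
    ultimately show "u = v" using conc_inj[OF g] that by blast
  qed
  show ?thesis
  proof (cases q)
    case (QLabel i)
    show ?thesis
    proof (cases "i < length hs")
      case True
      hence "hs!i \<in> set hs" by simp
      hence "fst (hs!i) < 2*m" "\<bar>snd (hs!i)\<bar> \<le> int K" using b D by (auto simp: bnd_def)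
      hence "conc pos (hs!i) < n" by (rule conc_lt[OF g])
      thus ?thesis using r QLabel True by auto
    next
      case False thus ?thesis using r QLabel by auto
    qed
  next
    case (QSucc i)
    show ?thesis
    proof (cases "i < length hs")
      case True
      obtain j d where jd: "hs!i = (j, d)" by force
      have "hs!i \<in> set hs" using True by simp
      hence jb: "j < 2*m" "\<bar>d\<bar> \<le> int D" using b jd by (auto simp: bnd_def)
      have pj: "K < pos j" "pos j + K + 1 < n" using g jb by (auto simp: good_def)
      have c1: "Suc (conc pos (hs!i)) = conc pos (j, d+1)" using jd jb pj D by (simp add: conc_def)
      have c2: "conc pos (j, d+1) < n" using jb pj D by (simp add: conc_def)
      have "respond (replicate n 0) (map (conc pos) hs) q = acquire (map (conc pos) hs) (conc pos (j, d+1))"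
        using QSucc True c1 c2 by simp
      also have "\<dots> = (\<lambda>(h, x). (map (conc pos) h, x)) (acqA hs (j, d+1))"
        by (rule acq_sim, rule inj) (use jb D in auto)
      also have "\<dots> = (map (conc pos) hs', a)" using r QSucc True jd by simp
      finally show ?thesis .
    next
      case False thus ?thesis using r QSucc by auto
    qed
  next
    case (QPred i)
    show ?thesis
    proof (cases "i < length hs")
      case True
      obtain j d where jd: "hs!i = (j, d)" by force
      have "hs!i \<in> set hs" using True by simp
      hence jb: "j < 2*m" "\<bar>d\<bar> \<le> int D" using b jd by (auto simp: bnd_def)
      have pj: "K < pos j" "pos j + K + 1 < n" using g jb by (auto simp: good_def)
      have c1: "conc pos (hs!i) - 1 = conc pos (j, d-1)" using jd jb pj D by (simp add: conc_def)
      have c2: "0 < conc pos (hs!i)" using jd jb pj D by (simp add: conc_def)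
      have "respond (replicate n 0) (map (conc pos) hs) q = acquire (map (conc pos) hs) (conc pos (j, d-1))"
        using QPred True c1 c2 by simp
      also have "\<dots> = (\<lambda>(h, x). (map (conc pos) h, x)) (acqA hs (j, d-1))"
        by (rule acq_sim, rule inj) (use jb D in auto)
      also have "\<dots> = (map (conc pos) hs', a)" using r QPred True jd by simp
      finally show ?thesis .
    next
      case False thus ?thesis using r QPred by auto
    qed
  next
    case (Output f vs)
    thus ?thesis using r by auto
  qed
qed

lemma exec_sim:
  assumes g: "good pos n K m"
  shows "bnd m D hs \<Longrightarrow> D + s \<le> K \<Longrightarrow>
    exec (replicate n 0) L inp s (map (conc pos) hs) hist =
    map_option (\<lambda>(f, hv, h). (f, hv, map (conc pos) h)) (execA L inp s hs hist)"
proof (induction s arbitrary: D hs hist)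
  case 0
  show ?case
  proof (cases "\<exists>f v. L inp hist = Output f v")
    case True
    then obtain f v where "L inp hist = Output f v" by blast
    thus ?thesis by (simp add: exec_out execA_out)
  next
    case False
    thus ?thesis by (simp add: exec_zero execA_zero)
  qed
next
  case (Suc s)
  show ?case
  proof (cases "\<exists>f v. L inp hist = Output f v")
    case True
    then obtain f v where "L inp hist = Output f v" by blast
    thus ?thesis by (simp add: exec_out execA_out)
  next
    case False
    obtain hs' a where r: "respA hs (L inp hist) = (hs', a)" by force
    have "respond (replicate n 0) (map (conc pos) hs) (L inp hist) = (map (conc pos) hs', a)"
      using resp_sim[OF g Suc.prems(1) _ r] Suc.prems by simp
    moreover have "bnd m (Suc D) hs'" using respA_bnd[OF Suc.prems(1) r] .
    ultimately show ?thesis using Suc.IH[of "Suc D" hs' "hist @ [a]"] Suc.prems False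
      by (simp add: exec_step execA_step r)
  qed
qed

lemma execA_bnd:
  "execA L inp s hs hist = Some (f, hv, h) \<Longrightarrow> bnd m D hs \<Longrightarrow> bnd m (D + s) h"
proof (induction s arbitrary: D hs hist)
  case 0
  show ?case
  proof (cases "\<exists>f v. L inp hist = Output f v")
    case True
    then obtain f' v where "L inp hist = Output f' v" by blast
    thus ?thesis using 0 by (simp add: execA_out)
  next
    case False
    thus ?thesis using 0 by (simp add: execA_zero)
  qed
next
  case (Suc s)
  show ?case
  proof (cases "\<exists>f v. L inp hist = Output f v")
    case True
    then obtain f' v where "L inp hist = Output f' v" by blast
    thus ?thesis using Suc.prems by (auto simp: execA_out intro: bnd_mono)
  next
    case False
    obtain hs' a where r: "respA hs (L inp hist) = (hs', a)" by force
    have "execA L inp s hs' (hist @ [a]) = Some (f, hv, h)"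
      using Suc.prems(1) False by (simp add: execA_step r)
    thus ?thesis using Suc.IH respA_bnd[OF Suc.prems(2) r] by fastforce
  qed
qed

lemma exec_mono:
  "exec w L inp s hs hist = Some r \<Longrightarrow> exec w L inp (s + k) hs hist = Some r"
proof (induction s arbitrary: hs hist)
  case 0
  show ?case
  proof (cases "\<exists>f v. L inp hist = Output f v")
    case True
    then obtain f' v where "L inp hist = Output f' v" by blast
    thus ?thesis using 0 by (simp add: exec_out)
  next
    case False
    thus ?thesis using 0 by (simp add: exec_zero)
  qed
next
  case (Suc s)
  show ?case
  proof (cases "\<exists>f v. L inp hist = Output f v")
    case True
    then obtain f' v where "L inp hist = Output f' v" by blast
    thus ?thesis using Suc.prems by (simp add: exec_out)
  next
    case False
    obtain hs' a where r: "respond w hs (L inp hist) = (hs', a)" by force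
    have "exec w L inp s hs' (hist @ [a]) = Some r"
      using Suc.prems(1) False by (simp add: exec_step r)
    thus ?thesis using Suc.IH False by (simp add: exec_step r)
  qed
qed

lemma exec_det:
  "exec w L inp s1 hs hist = Some r1 \<Longrightarrow> exec w L inp s2 hs hist = Some r2 \<Longrightarrow> r1 = r2"
  by (metis exec_mono add.commute option.inject)

definition inp0 :: "nat \<Rightarrow> (nat list \<times> bool) list" where
  "inp0 m = map (\<lambda>j. ([j], j < m)) [0..<2*m]"

definition hsA0 :: "nat \<Rightarrow> (nat \<times> int) list" where
  "hsA0 m = map (\<lambda>j. (j, 0)) [0..<2*m]"

definition tsOf :: "(nat \<Rightarrow> nat) \<Rightarrow> nat \<Rightarrow> (nat list \<times> bool) list" where
  "tsOf pos m = map (\<lambda>j. ([pos j], j < m)) [0..<2*m]"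

lemma bnd_hsA0: "bnd m 0 (hsA0 m)"
  by (auto simp: bnd_def hsA0_def)

lemma handle_of_distinct:
  assumes "distinct H" "j < length H"
  shows "handle_of H (H ! j) = j"
  unfolding handle_of_def
proof (rule Least_equality)
  show "j < length H \<and> H ! j = H ! j" using assms by simp
next
  fix k assume "k < length H \<and> H ! k = H ! j"
  thus "j \<le> k" using assms nth_eq_iff_index_eq by fastforce
qed

lemma inst_basic:
  assumes inj: "inj_on pos {0..<2*m}" and lt: "\<forall>j<2*m. pos j < n"
  shows "init_held (tsOf pos m) = map pos [0..<2*m]"
    and "encode (tsOf pos m) = inp0 m"
    and "distinct (tsOf pos m)"
    and "training_set (replicate n 0) 1 (set (tsOf pos m))"
    and "length (tsOf pos m) = 2*m"
    and "map (conc pos) (hsA0 m) = map pos [0..<2*m]"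
proof -
  have d: "distinct (map pos [0..<2*m])" using inj by (simp add: distinct_map)
  have c: "concat (map fst (tsOf pos m)) = map pos [0..<2*m]"
    by (simp add: tsOf_def concat_map_singleton comp_def)
  show ih: "init_held (tsOf pos m) = map pos [0..<2*m]"
    unfolding init_held_def c using d by (simp add: distinct_remdups_id)
  have h: "handle_of (map pos [0..<2*m]) (pos j) = j" if "j < 2*m" for j
    using handle_of_distinct[OF d, of j] that by simp
  show "encode (tsOf pos m) = inp0 m"
    unfolding encode_def ih by (simp add: tsOf_def inp0_def h)
  have "inj_on (\<lambda>j. ([pos j], j < m)) (set [0..<2*m])"
  proof (rule inj_onI)
    fix x y assume xy: "x \<in> set [0..<2*m]" "y \<in> set [0..<2*m]" "([pos x], x < m) = ([pos y], y < m)"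
    hence "pos x = pos y" by simp
    moreover have "x \<in> {0..<2*m}" "y \<in> {0..<2*m}" using xy by auto
    ultimately show "x = y" using inj by (meson inj_onD)
  qed
  thus "distinct (tsOf pos m)"
    unfolding tsOf_def by (simp add: distinct_map)
  show "training_set (replicate n 0) 1 (set (tsOf pos m))"
    using lt by (auto simp: training_set_def tsOf_def)
  show "length (tsOf pos m) = 2*m" by (simp add: tsOf_def)
  show "map (conc pos) (hsA0 m) = map pos [0..<2*m]"
    by (simp add: hsA0_def conc_def)
qed

lemma inst_phi:
  assumes "\<forall>j<2*m. (j < m \<longrightarrow> pos j < y) \<and> (\<not> j < m \<longrightarrow> y \<le> pos j)" "y < n"
  shows "phi_consistent (replicate n 0) (Less 0 1) 1 1 (set (tsOf pos m))"
  unfolding phi_consistent_def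
proof (intro exI[of _ "[y]"] conjI)
  show "consistent (replicate n 0) (Less 0 1) 1 [y] (set (tsOf pos m))"
    unfolding consistent_def tsOf_def holds_def
  proof (intro ballI)
    fix x assume "x \<in> set (map (\<lambda>j. ([pos j], j < m)) [0..<2*m])"
    then obtain j where j: "j < 2*m" "x = ([pos j], j < m)" by auto
    have "(pos j < y) = (j < m)"
    proof (cases "j < m")
      case True thus ?thesis using assms(1) j(1) by simp
    next
      case False
      hence "y \<le> pos j" using assms(1) j(1) by simp
      thus ?thesis using False by simp
    qed
    thus "case x of (us, b) \<Rightarrow> sat (replicate n 0) (\<lambda>i. if i < 1 then us ! i else [y] ! (i - 1)) (\<lambda>_. {}) (Less 0 1) = b"
      using j(2) by simp
  qed
qed (use assms in auto)

lemma arr_props: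
  assumes rk: "\<forall>j<2*m. rk j < 2*m \<and> (rk j < m \<longleftrightarrow> j < m)" "inj_on rk {0..<2*m}"
    and K: "K < base" "2*K+2 < \<sigma>" "base + (2*m-1)*\<sigma> + K + 1 < n"
  shows "good (\<lambda>j. base + rk j * \<sigma>) n K m"
    and "inj_on (\<lambda>j. base + rk j * \<sigma>) {0..<2*m}"
    and "\<forall>j<2*m. base + rk j * \<sigma> < n"
    and "\<forall>j<2*m. (j < m \<longrightarrow> base + rk j * \<sigma> < base + m * \<sigma>) \<and> (\<not> j < m \<longrightarrow> base + m * \<sigma> \<le> base + rk j * \<sigma>)"
    and "base + m * \<sigma> < n"
proof -
  have sp: "0 < \<sigma>" using K by simp
  have le: "rk j * \<sigma> \<le> (2*m-1)*\<sigma>" if "j < 2*m" for j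
  proof -
    have "rk j \<le> 2*m-1" using rk(1) that by fastforce
    thus ?thesis by (rule mult_le_mono1)
  qed
  show lt: "\<forall>j<2*m. base + rk j * \<sigma> < n"
  proof (intro allI impI)
    fix j assume "j < 2*m"
    from le[OF this] K show "base + rk j * \<sigma> < n" by linarith
  qed
  have far: "base + rk j * \<sigma> + 2*K + 2 < base + rk j' * \<sigma>" if "rk j < rk j'" for j j'
  proof -
    have "Suc (rk j) \<le> rk j'" using that by simp
    hence "Suc (rk j) * \<sigma> \<le> rk j' * \<sigma>" by (rule mult_le_mono1)
    thus ?thesis using K by simp
  qed
  show "good (\<lambda>j. base + rk j * \<sigma>) n K m"
    unfolding good_def
  proof (intro conjI allI impI)
    fix j assume "j < 2*m"
    thus "K < base + rk j * \<sigma>" using K by simp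
    have "rk j * \<sigma> \<le> (2*m-1)*\<sigma>" using le[OF \<open>j < 2*m\<close>] .
    thus "base + rk j * \<sigma> + K + 1 < n" using K by linarith
  next
    fix j j' assume "j < 2*m" "j' < 2*m" "j \<noteq> j'"
    hence "rk j \<noteq> rk j'" using rk(2) by (meson atLeastLessThan_iff inj_onD zero_le)
    thus "base + rk j * \<sigma> + 2*K + 2 < base + rk j' * \<sigma> \<or> base + rk j' * \<sigma> + 2*K + 2 < base + rk j * \<sigma>"
      using far by (meson linorder_neqE_nat)
  qed
  show "inj_on (\<lambda>j. base + rk j * \<sigma>) {0..<2*m}"
  proof (rule inj_onI)
    fix x y assume xy: "x \<in> {0..<2*m}" "y \<in> {0..<2*m}" "base + rk x * \<sigma> = base + rk y * \<sigma>"
    hence "rk x = rk y" using sp by simp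
    thus "x = y" using rk(2) xy by (meson inj_onD)
  qed
  show "\<forall>j<2*m. (j < m \<longrightarrow> base + rk j * \<sigma> < base + m * \<sigma>) \<and> (\<not> j < m \<longrightarrow> base + m * \<sigma> \<le> base + rk j * \<sigma>)"
  proof (intro allI impI conjI)
    fix j assume j: "j < 2*m"
    { assume "j < m" hence "rk j < m" using rk(1) j by simp
      thus "base + rk j * \<sigma> < base + m * \<sigma>" using sp by simp }
    { assume "\<not> j < m" hence "\<not> rk j < m" using rk(1) j by blast
      hence "m \<le> rk j" by simp
      hence "m * \<sigma> \<le> rk j * \<sigma>" by (rule mult_le_mono1)
      thus "base + m * \<sigma> \<le> base + rk j * \<sigma>" by simp }
  qed
  have "m \<le> 2*m - 1 \<or> m = 0" by arith
  hence "m * \<sigma> \<le> (2*m-1)*\<sigma>" by (auto intro: mult_le_mono1)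
  thus "base + m * \<sigma> < n" using K by linarith
qed

lemma splice:
  assumes "length X = n" "length Y = n" "a + length M \<le> n"
    "\<forall>i<n. (i < a \<or> a + length M \<le> i) \<longrightarrow> Y!i = X!i"
    "\<forall>i<length M. Y!(a+i) = M!i"
  shows "Y = take a X @ M @ drop (a + length M) X"
proof (rule nth_equalityI)
  show "length Y = length (take a X @ M @ drop (a + length M) X)" using assms(1-3) by simp
next
  fix i assume i: "i < length Y"
  show "Y ! i = (take a X @ M @ drop (a + length M) X) ! i"
  proof (cases "i < a")
    case True
    hence "(take a X @ M @ drop (a + length M) X) ! i = X ! i" using assms(1-3) by (simp add: nth_append)
    thus ?thesis using assms(2,4) i True by simp
  next
    case False
    note F = False
    have la: "length (take a X) = a" using assms(1,3) by simp
    show ?thesis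
    proof (cases "i < a + length M")
      case True
      have e: "a + (i - a) = i" using F by simp
      have "Y ! i = M ! (i - a)" using assms(5) True F e by (metis less_diff_conv2 not_less le_add1 add.commute)
      moreover have "i - a < length M" using True F by simp
      moreover have "(take a X @ M @ drop (a + length M) X) ! i = M ! (i - a)"
        using True F la \<open>i - a < length M\<close> by (simp add: nth_append)
      ultimately show ?thesis by simp
    next
      case False
      have n1: "\<not> i - a < length M" "\<not> i < a" using False F by simp_all
      have "(take a X @ M @ drop (a + length M) X) ! i = drop (a + length M) X ! (i - a - length M)"
        using n1 la by (simp add: nth_append)
      also have "\<dots> = X ! i" using False assms(1,3) i by simp
      finally show ?thesis using assms(2,4) False F i by simp
    qed
  qed
qed

lemma nth_rcr: "i < k + 1 + r \<Longrightarrow> (replicate k c @ [d] @ replicate r c) ! i = (if i = k then d else c)"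
proof (cases "i < k")
  case True thus ?thesis by (simp add: nth_append)
next
  case False
  assume i: "i < k + 1 + r"
  have "(replicate k c @ [d] @ replicate r c) ! i = ([d] @ replicate r c) ! (i - k)"
    using False by (simp add: nth_append)
  also have "\<dots> = (if i = k then d else c)"
    using False i by (cases "i - k") auto
  finally show ?thesis .
qed

lemma pump_holds:
  assumes fv: "fv1 f \<subseteq> {0..<1 + length P}"
    and pump: "\<forall>k. beh (lang f) (replicate (N + k * per) c0) = beh (lang f) (replicate N c0)"
    and c0: "c0 = (0::nat, {}::nat set, {}::nat set)"
    and D: "D = k0 * per" and u: "u2 = u1 + D" "N \<le> u1" "u2 + N < n"
    and Pq: "\<forall>q\<in>set P. q < n \<and> (q + N < u1 \<or> u2 + N < q)"
  shows "holds (replicate n 0) f 1 [u1] P = holds (replicate n 0) f 1 [u2] P"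
proof -
  define w :: "nat list" where "w = replicate n 0"
  define Iu where "Iu u z = (if z = 0 then u else if z \<le> length P then P!(z-1) else n)" for u z
  have hI: "holds w f 1 [u] P = sat w (Iu u) (\<lambda>_. {}) f" for u
    unfolding holds_def
  proof (rule sat_cong, intro ballI)
    fix z assume "z \<in> fv1 f"
    hence "z < 1 + length P" using fv by auto
    thus "(if z < 1 then [u] ! z else P ! (z - 1)) = Iu u z" by (simp add: Iu_def)
  qed
  have hE: "sat w (Iu u) (\<lambda>_. {}) f = (enc w (Iu u) (\<lambda>_. {}) \<in> lang f)" if "u < n" for u
  proof (rule lang_correct[symmetric], intro ballI)
    fix z assume "z \<in> fv1 f"
    hence z: "z < 1 + length P" using fv by auto
    show "Iu u z < length w"
    proof (cases "z = 0")
      case True thus ?thesis using that by (simp add: Iu_def w_def)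
    next
      case False
      hence "P!(z-1) \<in> set P" using z by simp
      thus ?thesis using Pq False z by (simp add: Iu_def w_def)
    qed
  qed
  define E where "E u = enc w (Iu u) (\<lambda>_. {})" for u
  have lenE: "length (E u) = n" for u by (simp add: E_def enc_def w_def)
  have nthE: "E u ! i = (0, {z. Iu u z = i}, {})" if "i < n" for u i
    using that by (simp add: E_def nth_enc w_def)
  define a where "a = u1 - N"
  define T where "T = 2*N + D + 1"
  have aT: "a + T = u2 + N + 1" "a + N = u1" using u by (simp_all add: a_def T_def)
  define cx where "cx = (0::nat, {0::nat}, {}::nat set)"
  have win: "{z. Iu u z = i} = (if u = i then {0} else {})" if "a \<le> i" "i < a + T" "i < n" for u i
  proof (intro set_eqI)
    fix z show "z \<in> {z. Iu u z = i} \<longleftrightarrow> z \<in> (if u = i then {0} else {})"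
    proof (cases "z = 0")
      case True thus ?thesis by (simp add: Iu_def)
    next
      case False
      show ?thesis
      proof (cases "z \<le> length P")
        case True
        hence "P!(z-1) \<in> set P" using False by simp
        hence "P!(z-1) \<noteq> i" using Pq that aT by fastforce
        thus ?thesis using False True by (simp add: Iu_def)
      next
        case False2: False
        thus ?thesis using False that by (simp add: Iu_def)
      qed
    qed
  qed
  have outside: "{z. Iu u1 z = i} = {z. Iu u2 z = i}" if "i < a \<or> a + T \<le> i" for i
  proof -
    have "u1 \<noteq> i" "u2 \<noteq> i" using that aT u by auto
    thus ?thesis by (auto simp: Iu_def)
  qed
  define B0 where "B0 = replicate N c0"
  define B where "B = replicate (N + D) c0"
  have eqB: "beh (lang f) B = beh (lang f) B0" unfolding B_def B0_def D using pump by simp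
  define X1 where "X1 = take a (E u1)"
  define Y1 where "Y1 = drop (a + T) (E u1)"
  have e1: "E u1 = X1 @ (B0 @ [cx] @ B) @ Y1"
  proof -
    have "E u1 = take a (E u1) @ (replicate N c0 @ [cx] @ replicate (D + N) c0) @ drop (a + length (replicate N c0 @ [cx] @ replicate (D + N) c0)) (E u1)"
    proof (rule splice[OF lenE lenE])
      show "a + length (replicate N c0 @ [cx] @ replicate (D + N) c0) \<le> n" using aT u by (simp add: T_def)
    next
      show "\<forall>i<n. (i < a \<or> a + length (replicate N c0 @ [cx] @ replicate (D + N) c0) \<le> i) \<longrightarrow> E u1 ! i = E u1 ! i" by simp
    next
      show "\<forall>i<length (replicate N c0 @ [cx] @ replicate (D + N) c0). E u1 ! (a + i) = (replicate N c0 @ [cx] @ replicate (D + N) c0) ! i"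
      proof (intro allI impI)
        fix i assume i: "i < length (replicate N c0 @ [cx] @ replicate (D + N) c0)"
        hence i': "i < N + 1 + (D + N)" by simp
        have "a + i < n" using i' aT u by (simp add: T_def)
        moreover have "a + i < a + T" using i' by (simp add: T_def)
        ultimately have "E u1 ! (a + i) = (0, if u1 = a + i then {0} else {}, {})"
          using nthE win by simp
        also have "\<dots> = (if i = N then cx else c0)" using aT c0 cx_def by auto
        also have "\<dots> = (replicate N c0 @ [cx] @ replicate (D + N) c0) ! i"
          by (rule nth_rcr[OF i', symmetric])
        finally show "E u1 ! (a + i) = (replicate N c0 @ [cx] @ replicate (D + N) c0) ! i" .
      qed
    qed
    moreover have "a + length (replicate N c0 @ [cx] @ replicate (D + N) c0) = a + T" by (simp add: T_def)
    moreover have "replicate (D + N) c0 = B" by (simp add: B_def add.commute)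
    ultimately show ?thesis unfolding X1_def Y1_def B0_def by metis
  qed
  have e2: "E u2 = X1 @ (B @ [cx] @ B0) @ Y1"
  proof -
    have "E u2 = take a (E u1) @ (replicate (N + D) c0 @ [cx] @ replicate N c0) @ drop (a + length (replicate (N + D) c0 @ [cx] @ replicate N c0)) (E u1)"
    proof (rule splice[OF lenE lenE])
      show "a + length (replicate (N + D) c0 @ [cx] @ replicate N c0) \<le> n" using aT u by (simp add: T_def)
    next
      show "\<forall>i<n. (i < a \<or> a + length (replicate (N + D) c0 @ [cx] @ replicate N c0) \<le> i) \<longrightarrow> E u2 ! i = E u1 ! i"
      proof (intro allI impI)
        fix i assume "i < n" "i < a \<or> a + length (replicate (N + D) c0 @ [cx] @ replicate N c0) \<le> i"
        hence "i < a \<or> a + T \<le> i" unfolding T_def by auto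
        thus "E u2 ! i = E u1 ! i" using outside nthE \<open>i < n\<close> by simp
      qed
    next
      show "\<forall>i<length (replicate (N + D) c0 @ [cx] @ replicate N c0). E u2 ! (a + i) = (replicate (N + D) c0 @ [cx] @ replicate N c0) ! i"
      proof (intro allI impI)
        fix i assume i: "i < length (replicate (N + D) c0 @ [cx] @ replicate N c0)"
        hence i': "i < (N + D) + 1 + N" by simp
        have "a + i < n" using i' aT u by (simp add: T_def)
        moreover have "a + i < a + T" using i' by (simp add: T_def)
        ultimately have "E u2 ! (a + i) = (0, if u2 = a + i then {0} else {}, {})"
          using nthE win by simp
        also have "\<dots> = (if i = N + D then cx else c0)" using aT u c0 cx_def by auto
        also have "\<dots> = (replicate (N + D) c0 @ [cx] @ replicate N c0) ! i"
          by (rule nth_rcr[OF i', symmetric])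
        finally show "E u2 ! (a + i) = (replicate (N + D) c0 @ [cx] @ replicate N c0) ! i" .
      qed
    qed
    moreover have "a + length (replicate (N + D) c0 @ [cx] @ replicate N c0) = a + T" by (simp add: T_def)
    ultimately show ?thesis unfolding X1_def Y1_def B0_def B_def by metis
  qed
  have "(E u1 \<in> lang f) = beh (lang f) B0 X1 ([cx] @ B @ Y1)" unfolding e1 beh_def by simp
  also have "\<dots> = beh (lang f) B X1 ([cx] @ B @ Y1)" using eqB by simp
  also have "\<dots> = beh (lang f) B (X1 @ B @ [cx]) Y1" unfolding beh_def by simp
  also have "\<dots> = beh (lang f) B0 (X1 @ B @ [cx]) Y1" using eqB by simp
  also have "\<dots> = (E u2 \<in> lang f)" unfolding e2 beh_def by simp
  finally have "(E u1 \<in> lang f) = (E u2 \<in> lang f)" .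
  moreover have "u1 < n" "u2 < n" using u by auto
  ultimately show ?thesis using hI hE unfolding E_def w_def by simp
qed

lemma inst_all:
  assumes rk: "\<forall>j<2*m. rk j < 2*m \<and> (rk j < m \<longleftrightarrow> j < m)" "inj_on rk {0..<2*m}"
    and K: "K < base" "2*K+2 < \<sigma>" "base + (2*m-1)*\<sigma> + K + 1 < n"
    and pos: "pos = (\<lambda>j. base + rk j * \<sigma>)"
  shows "good pos n K m" "distinct (tsOf pos m)" "training_set (replicate n 0) 1 (set (tsOf pos m))"
    "length (tsOf pos m) = 2*m" "phi_consistent (replicate n 0) (Less 0 1) 1 1 (set (tsOf pos m))"
    "run (replicate n 0) L (tsOf pos m) K = map_option (\<lambda>(f, hv, h). (f, hv, map (conc pos) h)) (execA L (inp0 m) K (hsA0 m) [])"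
    "set (replicate n (0::nat)) \<subseteq> {0}"
proof -
  note A0 = arr_props[OF rk K]
  have A1: "good pos n K m" using A0(1) pos by simp
  have A2: "inj_on pos {0..<2*m}" using A0(2) pos by simp
  have A3: "\<forall>j<2*m. pos j < n" using A0(3) pos by simp
  have A4: "\<forall>j<2*m. (j < m \<longrightarrow> pos j < base + m * \<sigma>) \<and> (\<not> j < m \<longrightarrow> base + m * \<sigma> \<le> pos j)"
    using A0(4) pos by simp
  note A = A1 A2 A3 A4 A0(5)
  note B = inst_basic[OF A(2) A(3)]
  show g: "good pos n K m" by (rule A(1))
  show "distinct (tsOf pos m)" by (rule B(3))
  show "training_set (replicate n 0) 1 (set (tsOf pos m))" by (rule B(4))
  show "length (tsOf pos m) = 2*m" by (rule B(5))
  show "phi_consistent (replicate n 0) (Less 0 1) 1 1 (set (tsOf pos m))"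
    using A(4) A(5) by (rule inst_phi)
  have "run (replicate n 0) L (tsOf pos m) K = exec (replicate n 0) L (inp0 m) K (map (conc pos) (hsA0 m)) []"
    unfolding run_def B(1) B(2) B(6) ..
  also have "\<dots> = map_option (\<lambda>(f, hv, h). (f, hv, map (conc pos) h)) (execA L (inp0 m) K (hsA0 m) [])"
    by (rule exec_sim[OF g bnd_hsA0]) simp
  finally show "run (replicate n 0) L (tsOf pos m) K = map_option (\<lambda>(f, hv, h). (f, hv, map (conc pos) h)) (execA L (inp0 m) K (hsA0 m) [])" .
  show "set (replicate n (0::nat)) \<subseteq> {0}" by auto
qed

lemma swap2:
  fixes i0 m j0 :: nat and rk :: "nat \<Rightarrow> nat"
  assumes "i0 < m" "m \<le> j0" "j0 < 2*m"
    and rk: "rk = (\<lambda>j. if j = i0 then m-1 else if j = m-1 then i0 else if j = j0 then m else if j = m then j0 else j)"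
  shows "\<forall>j<2*m. rk j < 2*m \<and> (rk j < m \<longleftrightarrow> j < m)" "inj_on rk {0..<2*m}" "rk i0 = m-1" "rk j0 = m"
proof -
  show "\<forall>j<2*m. rk j < 2*m \<and> (rk j < m \<longleftrightarrow> j < m)" using assms by auto
  have inv: "rk (rk j) = j" for j using assms by auto
  show "inj_on rk {0..<2*m}" by (metis inv inj_onI)
  show "rk i0 = m-1" using assms by simp
  show "rk j0 = m" using assms by auto
qed

lemma floor_bound:
  assumes "g * real k < real n" "0 < n"
  shows "nat \<lfloor>g\<rfloor> * k < n"
proof (cases "0 \<le> g")
  case True
  have "real (nat \<lfloor>g\<rfloor>) \<le> g" using True by linarith
  hence "real (nat \<lfloor>g\<rfloor>) * real k \<le> g * real k" by (simp add: mult_right_mono)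
  hence "real (nat \<lfloor>g\<rfloor> * k) < real n" using assms by simp
  thus ?thesis by linarith
next
  case False
  hence "nat \<lfloor>g\<rfloor> = 0" by simp
  thus ?thesis using assms by simp
qed

lemma main_false:
  assumes CL: "consistent_learner {0} (Less 0 1) 1 1 L" and SL: "sublinear_learner {0} 1 L"
  shows False
proof -
  from CL obtain q' l' where CLh: "\<forall>w ts. set w \<subseteq> {0} \<longrightarrow> distinct ts \<longrightarrow> training_set w 1 (set ts) \<longrightarrow>
        phi_consistent w (Less 0 1) 1 1 (set ts) \<longrightarrow>
        (\<exists>s f' hvs hs. run w L ts s = Some (f', hvs, hs) \<and>
           set hvs \<subseteq> {..<length hs} \<and>
           qr f' \<le> q' \<and> length hvs \<le> l' \<and> wf_param_formula {0} f' 1 (length hvs) \<and>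
           consistent w f' 1 (map ((!) hs) hvs) (set ts))"
    unfolding consistent_learner_def by blast
  define m where "m = Suc l'"
  have m1: "1 \<le> m" by (simp add: m_def)
  from SL obtain g where glim: "(\<lambda>n. g n / real n) \<longlonglongrightarrow> 0" and
    grun: "\<forall>w ts. set w \<subseteq> {0} \<longrightarrow> distinct ts \<longrightarrow> length ts \<le> 2*m \<longrightarrow> training_set w 1 (set ts) \<longrightarrow>
           run w L ts (nat \<lfloor>g (length w)\<rfloor>) \<noteq> None"
    unfolding sublinear_learner_def by blast
  have "eventually (\<lambda>n. g n / real n < 1 / real (8*m)) sequentially"
    using glim by (rule order_tendstoD) (use m1 in simp)
  then obtain N0 where N0: "\<forall>n\<ge>N0. g n / real n < 1 / real (8*m)"
    by (auto simp: eventually_sequentially)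
  define n where "n = max N0 (32*m + 32)"
  have nN0: "n \<ge> N0" and nbig: "32*m + 32 \<le> n" by (simp_all add: n_def)
  have npos: "0 < n" using nbig by simp
  have gb: "g n / real n < 1 / real (8*m)" using N0 nN0 by simp
  have "g n * real (8*m) < real n"
  proof -
    have "g n / real n * real (8*m) < 1 / real (8*m) * real (8*m)"
      using gb m1 by (intro mult_strict_right_mono) simp_all
    hence "g n / real n * real (8*m) < 1" using m1 by simp
    hence "g n * real (8*m) / real n < 1" by simp
    thus ?thesis using npos by (simp add: divide_less_eq)
  qed
  define S where "S = nat \<lfloor>g n\<rfloor>"
  have p3: "S * (8*m) < n" unfolding S_def by (rule floor_bound) fact+
  have p1: "(2*m-1)*(2*S+3) \<le> 4*(m*S) + 6*m"
  proof -
    have "(2*m-1)*(2*S+3) \<le> (2*m)*(2*S+3)" by (intro mult_le_mono1) simp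
    also have "\<dots> = 4*(m*S) + 6*m" by (simp add: algebra_simps)
    finally show ?thesis .
  qed
  have p2: "S \<le> m*S" using m1 by simp
  have p3': "8*(m*S) < n" using p3 by (simp add: algebra_simps)
  have cond1: "S + 1 + (2*m-1)*(2*S+3) + S + 1 < n" using p1 p2 p3' nbig by linarith
  define pos1 where "pos1 = (\<lambda>j::nat. (S+1) + id j * (2*S+3))"
  have rkid: "\<forall>j<2*m. id j < 2*m \<and> (id j < m \<longleftrightarrow> j < m)" "inj_on id {0..<2*m}" by simp_all
  have k1: "S < S + 1" "2*S+2 < 2*S+3" by simp_all
  note I1 = inst_all[OF rkid k1 cond1 pos1_def]
  note I1r = inst_all(6)[where L=L, OF rkid k1 cond1 pos1_def]
  have "run (replicate n 0) L (tsOf pos1 m) S \<noteq> None"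
    using grun I1(2,3,4,7) unfolding S_def by auto
  hence "execA L (inp0 m) S (hsA0 m) [] \<noteq> None" using I1r by auto
  then obtain f' hvs hsF where ex: "execA L (inp0 m) S (hsA0 m) [] = Some (f', hvs, hsF)" by auto
  have bF: "bnd m S hsF" using execA_bnd[OF ex bnd_hsA0] by simp
  have r1: "run (replicate n 0) L (tsOf pos1 m) S = Some (f', hvs, map (conc pos1) hsF)"
    using I1r ex by simp
  obtain s2 f2 hvs2 hs2 where r2: "run (replicate n 0) L (tsOf pos1 m) s2 = Some (f2, hvs2, hs2)"
    and pr2: "set hvs2 \<subseteq> {..<length hs2}" "length hvs2 \<le> l'" "wf_param_formula {0} f2 1 (length hvs2)"
    using CLh I1(2,3,5,7) by blast
  have "(f2, hvs2, hs2) = (f', hvs, map (conc pos1) hsF)"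
    using exec_det r1 r2 unfolding run_def by metis
  hence hv1: "set hvs \<subseteq> {..<length hsF}" "length hvs \<le> l'" and wf: "wf_param_formula {0} f' 1 (length hvs)"
    using pr2 by auto
  define A where "A = (\<lambda>h. fst (hsF ! h)) ` set hvs"
  have cA: "card A < m"
  proof -
    have "card A \<le> card (set hvs)" unfolding A_def by (rule card_image_le) simp
    also have "\<dots> \<le> length hvs" by (rule card_length)
    finally show ?thesis using hv1 m_def by simp
  qed
  have fA: "finite A" by (simp add: A_def)
  obtain i0 where i0: "i0 < m" "i0 \<notin> A"
  proof -
    have "\<not> {0..<m} \<subseteq> A"
    proof
      assume "{0..<m} \<subseteq> A"
      hence "card {0..<m} \<le> card A" using fA by (rule card_mono[rotated])
      thus False using cA by simp
    qed
    then obtain i where "i \<in> {0..<m}" "i \<notin> A" by blast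
    thus ?thesis using that by simp
  qed
  obtain j0 where j0: "m \<le> j0" "j0 < 2*m" "j0 \<notin> A"
  proof -
    have "\<not> {m..<2*m} \<subseteq> A"
    proof
      assume "{m..<2*m} \<subseteq> A"
      hence "card {m..<2*m} \<le> card A" using fA by (rule card_mono[rotated])
      thus False using cA by simp
    qed
    then obtain i where "i \<in> {m..<2*m}" "i \<notin> A" by blast
    thus ?thesis using that by auto
  qed
  define c0 where "c0 = (0::nat, {}::nat set, {}::nat set)"
  obtain N per where per: "0 < per" and pump: "\<forall>k. beh (lang f') (replicate (N + k * per) c0) = beh (lang f') (replicate N c0)"
    using reg_pump[OF reg_lang[of f'], of c0] by blast
  define rk where "rk = (\<lambda>j. if j = i0 then m-1 else if j = m-1 then i0 else if j = j0 then m else if j = m then j0 else j)"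
  note R = swap2[OF i0(1) j0(1) j0(2) rk_def]
  define k0 where "k0 = 2*S + 2*N + 3"
  define \<sigma> where "\<sigma> = k0 * per"
  have sg: "k0 \<le> \<sigma>" using per by (simp add: \<sigma>_def)
  define base where "base = S + N + 1"
  define n2 where "n2 = base + 2*m*\<sigma> + S + 2"
  have c2: "base + (2*m-1)*\<sigma> + S + 1 < n2"
  proof -
    have "(2*m-1)*\<sigma> \<le> (2*m)*\<sigma>" by (intro mult_le_mono1) simp
    thus ?thesis unfolding n2_def by linarith
  qed
  have c1: "S < base" "2*S+2 < \<sigma>" using sg by (simp_all add: base_def k0_def)
  define pos2 where "pos2 = (\<lambda>j. base + rk j * \<sigma>)"
  note I2 = inst_all[OF R(1) R(2) c1 c2 pos2_def]
  note I2r = inst_all(6)[where L=L, OF R(1) R(2) c1 c2 pos2_def]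
  have r3: "run (replicate n2 0) L (tsOf pos2 m) S = Some (f', hvs, map (conc pos2) hsF)"
    using I2r ex by simp
  obtain s3 f3 hvs3 hs3 where r4: "run (replicate n2 0) L (tsOf pos2 m) s3 = Some (f3, hvs3, hs3)"
    and pr4: "consistent (replicate n2 0) f3 1 (map ((!) hs3) hvs3) (set (tsOf pos2 m))"
    using CLh I2(2,3,5,7) by blast
  have "(f3, hvs3, hs3) = (f', hvs, map (conc pos2) hsF)"
    using exec_det r3 r4 unfolding run_def by metis
  hence cons: "consistent (replicate n2 0) f' 1 (map ((!) (map (conc pos2) hsF)) hvs) (set (tsOf pos2 m))"
    using pr4 by simp
  define P where "P = map ((!) (map (conc pos2) hsF)) hvs"
  have "([pos2 i0], True) \<in> set (tsOf pos2 m)" using i0 by (force simp: tsOf_def)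
  hence hT: "holds (replicate n2 0) f' 1 [pos2 i0] P = True" using cons unfolding consistent_def P_def by fastforce
  have "([pos2 j0], False) \<in> set (tsOf pos2 m)" using j0 by (force simp: tsOf_def)
  hence hF: "holds (replicate n2 0) f' 1 [pos2 j0] P = False" using cons unfolding consistent_def P_def by fastforce
  define u1 where "u1 = pos2 i0"
  define u2 where "u2 = pos2 j0"
  have u1e: "u1 = base + (m-1)*\<sigma>" using R(3) by (simp add: u1_def pos2_def)
  have u2e: "u2 = base + m*\<sigma>" using R(4) by (simp add: u2_def pos2_def)
  have uD: "u2 = u1 + \<sigma>" using u1e u2e m1 by (cases m) (simp_all add: algebra_simps)
  have Nu: "N \<le> u1" using u1e by (simp add: base_def)
  have s1: "\<sigma> \<le> m*\<sigma>" using m1 by simp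
  have s2: "m*\<sigma> \<le> 2*m*\<sigma>" by simp
  have s3: "N < \<sigma>" using sg by (simp add: k0_def)
  have uN: "u2 + N < n2" unfolding n2_def u2e using s1 s2 s3 by linarith
  have gd: "good pos2 n2 S m" by (rule I2(1))
  have Pq: "\<forall>q\<in>set P. q < n2 \<and> (q + N < u1 \<or> u2 + N < q)"
  proof
    fix q assume "q \<in> set P"
    then obtain h where h: "h \<in> set hvs" "q = conc pos2 (hsF ! h)" using hv1 by (auto simp: P_def)
    have hl: "h < length hsF" using h hv1 by auto
    obtain j d where jd: "hsF ! h = (j, d)" by force
    have "hsF ! h \<in> set hsF" using hl by simp
    hence jb: "j < 2*m" "\<bar>d\<bar> \<le> int S" using bF jd by (auto simp: bnd_def)
    have jA: "j \<in> A" using h jd by (force simp: A_def)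
    hence jn: "j \<noteq> i0" "j \<noteq> j0" using i0 j0 by auto
    have qn: "q < n2" using conc_lt[OF gd, of "(j, d)"] jb h jd by simp
    have pj: "S < pos2 j" using gd jb by (simp add: good_def)
    have qi: "int q = int (pos2 j) + d" using h jd pj jb by (simp add: conc_def)
    have rkn: "rk j \<noteq> m-1" "rk j \<noteq> m"
    proof -
      show "rk j \<noteq> m-1"
      proof
        assume "rk j = m-1"
        hence "rk j = rk i0" using R(3) by simp
        moreover have "j \<in> {0..<2*m}" "i0 \<in> {0..<2*m}" using jb i0 by auto
        ultimately have "j = i0" using R(2) by (meson inj_onD)
        thus False using jn by simp
      qed
      show "rk j \<noteq> m"
      proof
        assume "rk j = m"
        hence "rk j = rk j0" using R(4) by simp
        moreover have "j \<in> {0..<2*m}" "j0 \<in> {0..<2*m}" using jb j0 by auto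
        ultimately have "j = j0" using R(2) by (meson inj_onD)
        thus False using jn by simp
      qed
    qed
    have "q + N < u1 \<or> u2 + N < q"
    proof (cases "rk j < m")
      case True
      hence "Suc (rk j) \<le> m - 1" using rkn by simp
      hence "Suc (rk j) * \<sigma> \<le> (m-1) * \<sigma>" by (rule mult_le_mono1)
      hence "pos2 j + \<sigma> \<le> u1" using u1e by (simp add: pos2_def)
      hence "q + N < u1" using qi jb sg by (simp add: k0_def)
      thus ?thesis ..
    next
      case False
      hence "Suc m \<le> rk j" using rkn by simp
      hence "Suc m * \<sigma> \<le> rk j * \<sigma>" by (rule mult_le_mono1)
      hence "u2 + \<sigma> \<le> pos2 j" using u2e by (simp add: pos2_def)
      hence "u2 + N < q" using qi jb sg by (simp add: k0_def)
      thus ?thesis ..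
    qed
    thus "q < n2 \<and> (q + N < u1 \<or> u2 + N < q)" using qn by simp
  qed
  have fv: "fv1 f' \<subseteq> {0..<1 + length P}" using wf by (simp add: wf_param_formula_def P_def)
  have "holds (replicate n2 0) f' 1 [u1] P = holds (replicate n2 0) f' 1 [u2] P"
    by (rule pump_holds[OF fv pump c0_def \<sigma>_def uD Nu uN Pq])
  thus False using hT hF u1_def u2_def by simp
qed

theorem theorem2:
  shows "\<exists>\<Sigma> :: nat set. finite \<Sigma> \<and>
           (\<exists>\<phi> l. is_FO \<phi> \<and> wf_param_formula \<Sigma> \<phi> 1 l \<and>
              \<not> (\<exists>L. consistent_learner \<Sigma> \<phi> 1 l L \<and> sublinear_learner \<Sigma> 1 L))"
proof -
  have w: "wf_param_formula {0} (Less 0 1) 1 1" by (auto simp: wf_param_formula_def)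
  have n: "\<not> (\<exists>L. consistent_learner {0} (Less 0 1) 1 1 L \<and> sublinear_learner {0} 1 L)"
    using main_false by blast
  show ?thesis
    by (rule exI[of _ "{0}"], rule conjI, simp, rule exI[of _ "Less 0 1"], rule exI[of _ 1]) (use w n in simp)
qed

end
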